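(* Let $\{s_k\}_{k\ge0}$ be a strictly positive sequence and let $(L,\omega,\upsilon)$ be the corresponding Krein--Langer string with coefficients $l_j,\omega_j,\upsilon_j$ ($j\ge0$) given by $l_j = \frac{\Delta_{1,k(j)}^2}{\Delta_{0,k(j)-1}\Delta_{0,k(j)}}$; $\omega_j=\frac{\Delta_{0,k(j)}^2}{\Delta_{1,k(j)}\Delta_{1,k(j)+1}}$, $\upsilon_j=0$ if $k(j+1)-k(j)=1$; $\omega_j=\frac{\Delta_{-1,k(j)}}{\Delta_{1,k(j)}}-\frac{\Delta_{-1,k(j+1)}}{\Delta_{1,k(j+1)}}$, $\upsilon_j=\frac{\Delta_{-1,k(j)+1}^2}{\Delta_{0,k(j)}\Delta_{0,k(j)+1}}$ if $k(j+1)-k(j)=2$. Let $\{P_n\}_{n\ge0}$ and $\{Q_n\}_{n\ge0}$ be the associated polynomials of the first and second kind. Then for all $j\ge0$, $$l_j=|P_{k(j)}(0)|^2,\qquad \omega_j=\frac{Q_{k(j)}(0)}{P_{k(j)}(0)}-\frac{Q_{k(j+1)}(0)}{P_{k(j+1)}(0)},$$ and $$\upsilon_j=\begin{cases}0,& k(j+1)-k(j)=1,\\ |Q_{k(j)+1}(0)|^2,& k(j+1)-k(j)=2.\end{cases}$$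
   Context: A real sequence $\{s_k\}_{k\ge0}$ is strictly positive if $\Delta_{0,n}:=\det(s_{i+j})_{i,j=0}^{n}>0$ for all $n\ge0$; $\Delta_{0,-1}:=1$. $\Delta_{1,0}:=1$, $\Delta_{1,n}:=\det(s_{i+j+1})_{i,j=0}^{n-1}$ ($n\ge1$); $\Delta_{-1,0}:=0$, $\Delta_{-1,n}:=\det(s_{i+j-1})_{i,j=0}^{n}$ with $s_{-1}:=0$ ($n\ge1$). For $j\ge0$, $k(j)$ is the largest integer $k\ge0$ such that exactly $j$ of $\Delta_{1,0},\dots,\Delta_{1,k-1}$ are nonzero. Polynomials of the first kind: $P_0:=1/\sqrt{s_0}$ and, for $n\ge1$, $P_n(z):=\frac{1}{\sqrt{\Delta_{0,n-1}\Delta_{0,n}}}\det M_n(z)$, where $M_n(z)$ is the $(n+1)\times(n+1)$ matrix whose first $n$ rows are $(s_i,s_{i+1},\dots,s_{i+n})$, $i=0,\dots,n-1$, and whose last row is $(1,z,\dots,z^n)$. Polynomials of the second kind: $Q_0:=0$ and $Q_n(z):=\int_{\mathbb R}\frac{P_n(\lambda)-P_n(z)}{\lambda-z}\rho(d\lambda)$ for $n\ge1$, where $\rho$ is any positive Borel measure on $\mathbb R$ with $\int\lambda^k\rho(d\lambda)=s_k$ for all $k$ (this does not depend on the choice of $\rho$). *)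

theory Defs
  imports "HOL-Analysis.Analysis" "Jordan_Normal_Form.Determinant"
begin

text \<open>Hankel determinants. Delta0 s n = Delta_{0,n} for n >= -1 (Delta_{0,-1} = 1).\<close>
definition Delta0 :: "(nat \<Rightarrow> real) \<Rightarrow> int \<Rightarrow> real" where
  "Delta0 s n = (if n = -1 then 1
     else Determinant.det (Matrix.mat (nat n + 1) (nat n + 1) (\<lambda>(i,j). s (i + j))))"

definition Delta1 :: "(nat \<Rightarrow> real) \<Rightarrow> nat \<Rightarrow> real" where
  "Delta1 s n = (if n = 0 then 1
     else Determinant.det (Matrix.mat n n (\<lambda>(i,j). s (i + j + 1))))"

text \<open>Delta_{-1,n}, with the convention s_{-1} = 0.\<close>
definition Deltam1 :: "(nat \<Rightarrow> real) \<Rightarrow> nat \<Rightarrow> real" where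
  "Deltam1 s n = (if n = 0 then 0
     else Determinant.det (Matrix.mat (n + 1) (n + 1)
            (\<lambda>(i,j). if i + j = 0 then 0 else s (i + j - 1))))"

definition strictly_positive :: "(nat \<Rightarrow> real) \<Rightarrow> bool" where
  "strictly_positive s \<longleftrightarrow> (\<forall>n::nat. Delta0 s (int n) > 0)"

definition kidx :: "(nat \<Rightarrow> real) \<Rightarrow> nat \<Rightarrow> nat" where
  "kidx s j = (GREATEST k. card {i. i < k \<and> Delta1 s i \<noteq> 0} = j)"

definition Ppoly :: "(nat \<Rightarrow> real) \<Rightarrow> nat \<Rightarrow> real poly" where
  "Ppoly s n = (if n = 0 then [: 1 / sqrt (s 0) :]
     else Polynomial.smult (1 / sqrt (Delta0 s (int n - 1) * Delta0 s (int n)))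
       (Determinant.det (Matrix.mat (n + 1) (n + 1)
          (\<lambda>(i,j). if i < n then [: s (i + j) :] else monom 1 j))))"

definition Pfun :: "(nat \<Rightarrow> real) \<Rightarrow> nat \<Rightarrow> real \<Rightarrow> real" where
  "Pfun s n z = poly (Ppoly s n) z"

definition divdiff :: "real poly \<Rightarrow> real \<Rightarrow> real \<Rightarrow> real" where
  "divdiff p z x = (if x = z then poly (pderiv p) z else (poly p x - poly p z) / (x - z))"

definition moment_measure :: "(nat \<Rightarrow> real) \<Rightarrow> real measure \<Rightarrow> bool" where
  "moment_measure s \<rho> \<longleftrightarrow> sets \<rho> = sets borel \<and>
     (\<forall>k. integrable \<rho> (\<lambda>x. x ^ k) \<and> (\<integral>x. x ^ k \<partial>\<rho>) = s k)"

definition Qfun :: "(nat \<Rightarrow> real) \<Rightarrow> real measure \<Rightarrow> nat \<Rightarrow> real \<Rightarrow> real" where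
  "Qfun s \<rho> n z = (if n = 0 then 0 else (\<integral>x. divdiff (Ppoly s n) z x \<partial>\<rho>))"

definition lcoef :: "(nat \<Rightarrow> real) \<Rightarrow> nat \<Rightarrow> real" where
  "lcoef s j = (Delta1 s (kidx s j))\<^sup>2 /
      (Delta0 s (int (kidx s j) - 1) * Delta0 s (int (kidx s j)))"

definition omegacoef :: "(nat \<Rightarrow> real) \<Rightarrow> nat \<Rightarrow> real" where
  "omegacoef s j = (let k = kidx s j; k' = kidx s (Suc j) in
     if k' - k = 1 then (Delta0 s (int k))\<^sup>2 / (Delta1 s k * Delta1 s (k + 1))
     else if k' - k = 2 then Deltam1 s k / Delta1 s k - Deltam1 s k' / Delta1 s k'
     else undefined)"

definition upsiloncoef :: "(nat \<Rightarrow> real) \<Rightarrow> nat \<Rightarrow> real" where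
  "upsiloncoef s j = (let k = kidx s j; k' = kidx s (Suc j) in
     if k' - k = 1 then 0
     else if k' - k = 2 then (Deltam1 s (k + 1))\<^sup>2 / (Delta0 s (int k) * Delta0 s (int k + 1))
     else undefined)"

end

theory Submission
  imports Defs "Jordan_Normal_Form.Char_Poly"
begin


lemma det_col_single:
  assumes A: "(A :: 'a :: comm_ring_1 mat) \<in> carrier_mat n n" and j: "j < n" and k: "k < n"
    and z: "\<And>i. i < n \<Longrightarrow> i \<noteq> k \<Longrightarrow> A $$ (i,j) = 0"
  shows "det A = A $$ (k,j) * cofactor A k j"
proof -
  have "det A = (\<Sum>i<n. A $$ (i,j) * cofactor A i j)" by (rule laplace_expansion_column[OF A j])
  also have "\<dots> = A $$ (k,j) * cofactor A k j + (\<Sum>i\<in>{..<n} - {k}. A $$ (i,j) * cofactor A i j)"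
    using k by (subst sum.remove[of _ k]) auto
  also have "(\<Sum>i\<in>{..<n} - {k}. A $$ (i,j) * cofactor A i j) = 0"
    by (rule sum.neutral) (auto simp: z)
  finally show ?thesis by simp
qed

lemma det_row_single:
  assumes A: "(A :: 'a :: comm_ring_1 mat) \<in> carrier_mat n n" and i: "i < n" and k: "k < n"
    and z: "\<And>j. j < n \<Longrightarrow> j \<noteq> k \<Longrightarrow> A $$ (i,j) = 0"
  shows "det A = A $$ (i,k) * cofactor A i k"
proof -
  have "det A = (\<Sum>j<n. A $$ (i,j) * cofactor A i j)" by (rule laplace_expansion_row[OF A i])
  also have "\<dots> = A $$ (i,k) * cofactor A i k + (\<Sum>j\<in>{..<n} - {k}. A $$ (i,j) * cofactor A i j)"
    using k by (subst sum.remove[of _ k]) auto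
  also have "(\<Sum>j\<in>{..<n} - {k}. A $$ (i,j) * cofactor A i j) = 0"
    by (rule sum.neutral) (auto simp: z)
  finally show ?thesis by simp
qed

lemma det_zero_col:
  assumes A: "(A :: 'a :: comm_ring_1 mat) \<in> carrier_mat n n" and j: "j < n"
    and z: "\<And>i. i < n \<Longrightarrow> A $$ (i,j) = 0"
  shows "det A = 0"
  using laplace_expansion_column[OF A j] z by simp

lemma DJ_nonzero:
  fixes A :: "'a :: idom mat"
  assumes A: "A \<in> carrier_mat (Suc (Suc n)) (Suc (Suc n))" and dA: "det A \<noteq> 0"
  shows "det A * det (mat_delete (mat_delete A 0 0) n n)
       = det (mat_delete A 0 0) * det (mat_delete A (Suc n) (Suc n))
         - det (mat_delete A 0 (Suc n)) * det (mat_delete A (Suc n) 0)"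
proof -
  define N where "N = Suc (Suc n)"
  define m where "m = Suc n"
  define C where "C = adj_mat A"
  have AN: "A \<in> carrier_mat N N" using A N_def by simp
  have CN: "C \<in> carrier_mat N N" using adj_mat(1)[OF AN] C_def by simp
  have AC: "A * C = det A \<cdot>\<^sub>m 1\<^sub>m N" using adj_mat(2)[OF AN] C_def by simp
  have Cij: "C $$ (i,j) = cofactor A j i" if "i < N" "j < N" for i j
    using that AN by (simp add: C_def adj_mat_def)
  define X where "X = mat N N (\<lambda>(i,j). if j = 0 then C $$ (i,0) else if j = m then C $$ (i,m)
     else (if i = j then 1 else 0))"
  have XN: "X \<in> carrier_mat N N" by (simp add: X_def)
  define W where "W = mat N N (\<lambda>(i,j). if j = 0 then (if i = 0 then det A else 0)
     else if j = m then (if i = m then det A else 0) else A $$ (i,j))"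
  have AX: "A * X = W"
  proof (rule eq_matI)
    fix i j assume i: "i < dim_row W" and j: "j < dim_col W"
    hence i: "i < N" and j: "j < N" by (auto simp: W_def)
    have e: "(A * X) $$ (i,j) = (\<Sum>k<N. A $$ (i,k) * X $$ (k,j))"
      using i j AN XN by (simp add: scalar_prod_def lessThan_atLeast0 X_def)
    have eC: "(A * C) $$ (i,j) = (\<Sum>k<N. A $$ (i,k) * C $$ (k,j))"
      using i j AN CN by (simp add: scalar_prod_def lessThan_atLeast0)
    show "(A * X) $$ (i,j) = W $$ (i,j)"
    proof (cases "j = 0 \<or> j = m")
      case True
      hence "(A * X) $$ (i,j) = (A * C) $$ (i,j)" unfolding e eC using j
        by (auto simp: X_def m_def N_def intro!: sum.cong)
      also have "\<dots> = W $$ (i,j)" unfolding AC using i j True by (auto simp: W_def m_def N_def)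
      finally show ?thesis .
    next
      case False
      hence "(A * X) $$ (i,j) = (\<Sum>k<N. A $$ (i,k) * (if k = j then 1 else 0))" unfolding e
        using j by (auto simp: X_def intro!: sum.cong)
      also have "\<dots> = A $$ (i,j)" using j by (simp add: if_distrib cong: if_cong)
      finally show ?thesis using False i j by (simp add: W_def)
    qed
  qed (insert AN, auto simp: W_def X_def)
  have WN: "W \<in> carrier_mat N N" by (simp add: W_def)
  have "det W = W $$ (0,0) * cofactor W 0 0"
    by (rule det_col_single[OF WN]) (auto simp: W_def N_def)
  also have "\<dots> = det A * det (mat_delete W 0 0)" by (simp add: W_def N_def cofactor_def)
  finally have dW1: "det W = det A * det (mat_delete W 0 0)" .
  define V where "V = mat_delete W 0 0"
  have VN: "V \<in> carrier_mat m m" using WN by (simp add: V_def mat_delete_carrier N_def m_def mat_delete_def)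
  have Vij: "V $$ (i,j) = W $$ (Suc i, Suc j)" if "i < m" "j < m" for i j
    using that by (simp add: V_def mat_delete_def W_def N_def m_def)
  have "det V = V $$ (n,n) * cofactor V n n"
    by (rule det_col_single[OF VN]) (auto simp: Vij W_def N_def m_def)
  also have "\<dots> = det A * det (mat_delete V n n)"
    by (simp add: Vij W_def N_def m_def cofactor_def)
  also have "mat_delete V n n = mat_delete (mat_delete A 0 0) n n"
    using AN by (auto simp: V_def W_def mat_delete_def N_def m_def intro!: eq_matI)
  finally have dW: "det W = det A * (det A * det (mat_delete (mat_delete A 0 0) n n))"
    using dW1 V_def by simp
  have d0: "det (mat_delete X 0 0) = C $$ (m,m)"
  proof -
    have Y: "mat_delete X 0 0 \<in> carrier_mat m m" by (simp add: X_def mat_delete_def N_def m_def)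
    have ut: "upper_triangular (mat_delete X 0 0)"
      by (auto simp: upper_triangular_def X_def mat_delete_def N_def m_def)
    have "det (mat_delete X 0 0) = prod_list (diag_mat (mat_delete X 0 0))"
      by (rule det_upper_triangular[OF ut Y])
    also have "diag_mat (mat_delete X 0 0) = map (\<lambda>i. if i = n then C $$ (m,m) else 1) [0..<m]"
      by (auto simp: diag_mat_def X_def mat_delete_def N_def m_def intro!: map_cong)
    also have "prod_list \<dots> = C $$ (m,m)"
    proof -
      have one: "prod_list (map (\<lambda>_. (1::'a)) [0..<k]) = 1" for k by (induct k) auto
      have "prod_list (map (\<lambda>i. if i = n then C $$ (m,m) else 1) [0..<n]) = 1"
        by (subst map_cong[OF refl, of _ _ "\<lambda>_. 1"]) (auto simp: one)
      thus ?thesis unfolding m_def by simp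
    qed
    finally show ?thesis .
  qed
  have dm: "det (mat_delete X m 0) = (-1)^n * C $$ (0,m)"
  proof -
    define Z where "Z = mat_delete X m 0"
    have ZN: "Z \<in> carrier_mat m m" by (simp add: Z_def X_def mat_delete_def N_def m_def)
    have Zij: "Z $$ (i,j) = X $$ (i, Suc j)" if "i < m" "j < m" for i j
      using that by (simp add: Z_def mat_delete_def X_def N_def m_def)
    have "mat_delete Z 0 n = 1\<^sub>m n"
      by (rule eq_matI) (auto simp: mat_delete_def Zij X_def N_def m_def Z_def)
    hence cf: "cofactor Z 0 n = (-1)^n" by (simp add: cofactor_def)
    have "det Z = Z $$ (0,n) * cofactor Z 0 n"
      by (rule det_row_single[OF ZN]) (auto simp: Zij X_def N_def m_def)
    thus ?thesis unfolding cf Z_def[symmetric] by (simp add: Zij X_def N_def m_def)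
  qed
  have dX: "det X = C $$ (0,0) * C $$ (m,m) - C $$ (m,0) * C $$ (0,m)"
  proof -
    have "det X = (\<Sum>i<N. X $$ (i,0) * cofactor X i 0)"
      by (rule laplace_expansion_column[OF XN]) (simp add: N_def)
    also have "\<dots> = (\<Sum>i\<in>{0,m}. X $$ (i,0) * cofactor X i 0)"
    proof (rule sum.mono_neutral_right)
      show "\<forall>i\<in>{..<N} - {0, m}. X $$ (i, 0) * cofactor X i 0 = 0"
      proof
        fix i assume i: "i \<in> {..<N} - {0, m}"
        then obtain i' where i': "i = Suc i'" "i' < n" by (cases i) (auto simp: N_def m_def)
        have "det (mat_delete X i 0) = 0"
          by (rule det_zero_col[of _ m i']) (use i' in \<open>auto simp: mat_delete_def X_def N_def m_def\<close>)
        thus "X $$ (i, 0) * cofactor X i 0 = 0" by (simp add: cofactor_def)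
      qed
    qed (auto simp: N_def m_def)
    also have "\<dots> = C $$ (0,0) * C $$ (m,m) + C $$ (m,0) * ((-1)^(m) * ((-1)^n * C $$ (0,m)))"
      using d0 dm by (simp add: cofactor_def X_def N_def m_def)
    also have "\<dots> = C $$ (0,0) * C $$ (m,m) - C $$ (m,0) * C $$ (0,m)"
      by (simp add: m_def)
    finally show ?thesis .
  qed
  have "det A * det X = det A * (det A * det (mat_delete (mat_delete A 0 0) n n))"
  proof -
    have "det A * det X = det W" using det_mult[OF AN XN] AX by simp
    thus ?thesis using dW by simp
  qed
  hence eq: "det X = det A * det (mat_delete (mat_delete A 0 0) n n)" using dA by simp
  have c: "C $$ (0,0) = det (mat_delete A 0 0)" "C $$ (m,m) = det (mat_delete A m m)"
     "C $$ (m,0) = (-1)^m * det (mat_delete A 0 m)" "C $$ (0,m) = (-1)^m * det (mat_delete A m 0)"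
    by (auto simp: Cij N_def m_def cofactor_def)
  have "(-1::'a)^m * (-1)^m = 1" by (simp add: power_add[symmetric])
  thus ?thesis using eq unfolding dX c by (simp add: m_def algebra_simps)
qed

lemma map_mat_delete: "map_mat f (mat_delete M i j) = mat_delete (map_mat f M) i j"
  by (rule eq_matI) (auto simp: mat_delete_def)

lemma DJ:
  fixes A :: "'a :: idom mat"
  assumes A: "A \<in> carrier_mat (Suc (Suc n)) (Suc (Suc n))"
  shows "det A * det (mat_delete (mat_delete A 0 0) n n)
       = det (mat_delete A 0 0) * det (mat_delete A (Suc n) (Suc n))
         - det (mat_delete A 0 (Suc n)) * det (mat_delete A (Suc n) 0)"
proof -
  have evh: "comm_ring_hom (\<lambda>p::'a poly. poly p 0)" by unfold_locales auto
  define P where "P = char_poly_matrix (- A)"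
  have mA: "- A \<in> carrier_mat (Suc (Suc n)) (Suc (Suc n))" using A by simp
  have PN: "P \<in> carrier_mat (Suc (Suc n)) (Suc (Suc n))" using mA by (simp add: P_def)
  have "det P \<noteq> 0" using degree_monic_char_poly[OF mA] unfolding P_def char_poly_def[symmetric]
    by auto
  from DJ_nonzero[OF PN this]
  have "poly (det P * det (mat_delete (mat_delete P 0 0) n n)) 0
       = poly (det (mat_delete P 0 0) * det (mat_delete P (Suc n) (Suc n))
         - det (mat_delete P 0 (Suc n)) * det (mat_delete P (Suc n) 0)) 0" by simp
  moreover have ev: "map_mat (\<lambda>p. poly p 0) P = A"
    using A by (auto simp: P_def char_poly_matrix_def intro!: eq_matI)
  ultimately show ?thesis
    by (simp add: Determinant.comm_ring_hom.hom_det[OF evh, symmetric] map_mat_delete ev)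
qed



definition Hm :: "(nat \<Rightarrow> real) \<Rightarrow> nat \<Rightarrow> real mat" where
  "Hm s n = mat (Suc n) (Suc n) (\<lambda>(i,j). if i + j = 0 then 0 else s (i + j - 1))"
definition H1 :: "(nat \<Rightarrow> real) \<Rightarrow> nat \<Rightarrow> real mat" where
  "H1 s n = mat n n (\<lambda>(i,j). s (i + j + 1))"
definition H0 :: "(nat \<Rightarrow> real) \<Rightarrow> nat \<Rightarrow> real mat" where
  "H0 s n = mat (Suc n) (Suc n) (\<lambda>(i,j). s (i + j))"

lemma Deltam1_eq: "Deltam1 s n = det (Hm s n)"
proof (cases n)
  case 0
  have "Hm s 0 = mat 1 1 (\<lambda>_. 0)" by (auto simp: Hm_def intro!: eq_matI)
  moreover have "det (mat 1 1 (\<lambda>_. 0::real)) = 0" by (rule det_zero_col[of _ 1 0]) auto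
  ultimately show ?thesis using 0 by (simp add: Deltam1_def)
qed (simp add: Deltam1_def Hm_def)

lemma Delta1_eq: "Delta1 s n = det (H1 s n)"
proof (cases n)
  case 0
  then show ?thesis by (simp add: Delta1_def H1_def det_def')
qed (simp add: Delta1_def H1_def)

lemma Delta0_eq: "Delta0 s (int n) = det (H0 s n)"
  by (simp add: Delta0_def H0_def)

lemma key_identity:
  "Deltam1 s (Suc n) * Delta1 s n = Delta1 s (Suc n) * Deltam1 s n - (Delta0 s (int n))^2"
proof -
  have A: "Hm s (Suc n) \<in> carrier_mat (Suc (Suc n)) (Suc (Suc n))" by (simp add: Hm_def)
  have e1: "mat_delete (H1 s (Suc n)) n n = H1 s n"
    by (rule eq_matI) (auto simp: mat_delete_def H1_def)
  have e2: "mat_delete (Hm s (Suc n)) 0 0 = H1 s (Suc n)"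
    by (rule eq_matI) (auto simp: mat_delete_def Hm_def H1_def)
  have e3: "mat_delete (Hm s (Suc n)) (Suc n) (Suc n) = Hm s n"
    by (rule eq_matI) (auto simp: mat_delete_def Hm_def)
  have e4: "mat_delete (Hm s (Suc n)) 0 (Suc n) = H0 s n"
    by (rule eq_matI) (auto simp: mat_delete_def Hm_def H0_def)
  have e5: "mat_delete (Hm s (Suc n)) (Suc n) 0 = H0 s n"
    by (rule eq_matI) (auto simp: mat_delete_def Hm_def H0_def)
  show ?thesis using DJ[OF A] unfolding e2 e1 e3 e4 e5 Deltam1_eq Delta1_eq Delta0_eq
    by (simp add: power2_eq_square)
qed

definition cnt :: "(nat \<Rightarrow> real) \<Rightarrow> nat \<Rightarrow> nat" where
  "cnt s k = card {i. i < k \<and> Delta1 s i \<noteq> 0}"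

lemma D0_pos: "strictly_positive s \<Longrightarrow> Delta0 s (int n) > 0"
  by (simp add: strictly_positive_def)

lemma D1_nz: assumes "strictly_positive s"
  shows "Delta1 s n \<noteq> 0 \<or> Delta1 s (Suc n) \<noteq> 0"
proof (rule ccontr)
  assume "\<not> ?thesis"
  hence "(Delta0 s (int n))^2 = 0" using key_identity[of s n] by simp
  thus False using D0_pos[OF assms, of n] by simp
qed

lemma cnt_0[simp]: "cnt s 0 = 0" by (simp add: cnt_def)

lemma cnt_Suc: "cnt s (Suc k) = cnt s k + (if Delta1 s k \<noteq> 0 then 1 else 0)"
proof -
  have "{i. i < Suc k \<and> Delta1 s i \<noteq> 0} = {i. i < k \<and> Delta1 s i \<noteq> 0} \<union> (if Delta1 s k \<noteq> 0 then {k} else {})"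
    by (auto simp: less_Suc_eq)
  thus ?thesis by (simp add: cnt_def)
qed

lemma cnt_mono: "k \<le> k' \<Longrightarrow> cnt s k \<le> cnt s k'"
  unfolding cnt_def by (rule card_mono) auto

lemma cnt_ge: assumes "strictly_positive s" shows "k \<le> cnt s (2 * k)"
proof (induct k)
  case (Suc k)
  have "cnt s (2 * Suc k) = cnt s (2*k) + (if Delta1 s (2*k) \<noteq> 0 then 1 else 0)
      + (if Delta1 s (Suc (2*k)) \<noteq> 0 then 1 else 0)"
    by (simp add: cnt_Suc)
  thus ?case using Suc D1_nz[OF assms, of "2*k"] by auto
qed simp

lemma kidx_props: assumes sp: "strictly_positive s"
  shows "cnt s (kidx s j) = j \<and> (\<forall>k. cnt s k = j \<longrightarrow> k \<le> kidx s j)"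
proof -
  have bound: "k \<le> 2 * j + 1" if "cnt s k = j" for k
  proof (rule ccontr)
    assume "\<not> ?thesis"
    hence "2 * (Suc j) \<le> k" by simp
    hence "cnt s (2 * Suc j) \<le> cnt s k" by (rule cnt_mono)
    with cnt_ge[OF sp, of "Suc j"] that show False by simp
  qed
  have ex: "\<exists>k. cnt s k = j"
  proof -
    define k where "k = (LEAST k. j \<le> cnt s k)"
    have "j \<le> cnt s (2*j)" by (rule cnt_ge[OF sp])
    hence jk: "j \<le> cnt s k" unfolding k_def by (rule LeastI)
    show ?thesis
    proof (cases k)
      case 0 thus ?thesis using jk cnt_0 by (metis le_zero_eq)
    next
      case (Suc k')
      have "\<not> j \<le> cnt s k'" using Suc k_def not_less_Least by (metis lessI)
      hence "cnt s k = j" using jk Suc cnt_Suc[of s k'] by (auto split: if_splits)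
      thus ?thesis by blast
    qed
  qed
  then obtain k0 where k0: "cnt s k0 = j" by blast
  have "cnt s (kidx s j) = j" unfolding kidx_def cnt_def[symmetric]
    by (rule GreatestI_nat[where P="\<lambda>k. cnt s k = j", OF k0, of "2*j+1"]) (use bound in auto)
  moreover have "\<forall>k. cnt s k = j \<longrightarrow> k \<le> kidx s j" unfolding kidx_def cnt_def[symmetric]
    by (auto intro: Greatest_le_nat bound)
  ultimately show ?thesis by blast
qed

lemma kidx_eqI: assumes "cnt s k = j" "\<And>k'. cnt s k' = j \<Longrightarrow> k' \<le> k"
  shows "kidx s j = k"
  unfolding kidx_def cnt_def[symmetric] by (rule Greatest_equality) (use assms in auto)

lemma kidx_D1: assumes sp: "strictly_positive s" shows "Delta1 s (kidx s j) \<noteq> 0"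
proof
  assume "Delta1 s (kidx s j) = 0"
  hence "cnt s (Suc (kidx s j)) = j" using kidx_props[OF sp, of j] by (simp add: cnt_Suc)
  thus False using kidx_props[OF sp, of j] by fastforce
qed

lemma kidx_gap: assumes sp: "strictly_positive s"
  shows "(Delta1 s (Suc (kidx s j)) \<noteq> 0 \<and> kidx s (Suc j) = Suc (kidx s j))
       \<or> (Delta1 s (Suc (kidx s j)) = 0 \<and> kidx s (Suc j) = Suc (Suc (kidx s j)))"
proof -
  define K where "K = kidx s j"
  have cK: "cnt s K = j" using kidx_props[OF sp, of j] K_def by simp
  have dK: "Delta1 s K \<noteq> 0" using kidx_D1[OF sp] K_def by simp
  have c1: "cnt s (Suc K) = Suc j" using cK dK by (simp add: cnt_Suc)
  show ?thesis
  proof (cases "Delta1 s (Suc K) \<noteq> 0")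
    case True
    have c2: "cnt s (Suc (Suc K)) = Suc (Suc j)" using c1 True by (simp add: cnt_Suc)
    have "kidx s (Suc j) = Suc K"
    proof (rule kidx_eqI[OF c1])
      fix k' assume "cnt s k' = Suc j"
      thus "k' \<le> Suc K" using cnt_mono[of "Suc (Suc K)" k' s] c2 by (cases "Suc (Suc K) \<le> k'") auto
    qed
    thus ?thesis using True K_def by simp
  next
    case False
    have d2: "Delta1 s (Suc (Suc K)) \<noteq> 0" using D1_nz[OF sp, of "Suc K"] False by simp
    have c2: "cnt s (Suc (Suc K)) = Suc j" using c1 False by (simp add: cnt_Suc)
    have c3: "cnt s (Suc (Suc (Suc K))) = Suc (Suc j)" using c2 d2 by (simp add: cnt_Suc)
    have "kidx s (Suc j) = Suc (Suc K)"
    proof (rule kidx_eqI[OF c2])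
      fix k' assume "cnt s k' = Suc j"
      thus "k' \<le> Suc (Suc K)" using cnt_mono[of "Suc (Suc (Suc K))" k' s] c3
        by (cases "Suc (Suc (Suc K)) \<le> k'") auto
    qed
    thus ?thesis using False K_def by simp
  qed
qed



definition Bv :: "(nat \<Rightarrow> real) \<Rightarrow> nat \<Rightarrow> (nat \<Rightarrow> real) \<Rightarrow> real mat" where
  "Bv s n v = mat (Suc n) (Suc n) (\<lambda>(i,j). if i < n then s (i + j) else v j)"

definition cf :: "(nat \<Rightarrow> real) \<Rightarrow> nat \<Rightarrow> nat \<Rightarrow> real" where
  "cf s n j = (-1)^(n+j) * det (mat_delete (Bv s n (\<lambda>_. 0)) n j)"

lemma Bv_delete: "mat_delete (Bv s n v) n j = mat_delete (Bv s n w) n j"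
  by (rule eq_matI) (auto simp: mat_delete_def Bv_def)

lemma det_Bv: "det (Bv s n v) = (\<Sum>j\<le>n. v j * cf s n j)"
proof -
  have "det (Bv s n v) = (\<Sum>j<Suc n. Bv s n v $$ (n,j) * cofactor (Bv s n v) n j)"
    by (rule laplace_expansion_row) (auto simp: Bv_def)
  also have "\<dots> = (\<Sum>j\<le>n. v j * cf s n j)" unfolding lessThan_Suc_atMost
  proof (rule sum.cong[OF refl])
    fix j assume j: "j \<in> {..n}"
    have "Bv s n v $$ (n,j) = v j" using j by (simp add: Bv_def)
    moreover have "mat_delete (Bv s n v) n j = mat_delete (Bv s n (\<lambda>_. 0)) n j" by (rule Bv_delete)
    ultimately show "Bv s n v $$ (n,j) * cofactor (Bv s n v) n j = v j * cf s n j"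
      by (simp add: cofactor_def cf_def)
  qed
  finally show ?thesis .
qed

lemma cf0: "cf s n 0 = (-1)^n * Delta1 s n"
proof -
  have "mat_delete (Bv s n (\<lambda>_. 0)) n 0 = H1 s n"
    by (rule eq_matI) (auto simp: mat_delete_def Bv_def H1_def)
  thus ?thesis by (simp add: cf_def Delta1_eq)
qed

lemma det_Bv_m1: "det (Bv s n (\<lambda>j. if j = 0 then 0 else s (j - 1))) = (-1)^n * Deltam1 s n"
proof -
  have "det (Hm s n) = (\<Sum>j<Suc n. Hm s n $$ (0,j) * cofactor (Hm s n) 0 j)"
    by (rule laplace_expansion_row) (auto simp: Hm_def)
  also have "\<dots> = (\<Sum>j\<le>n. (if j = 0 then 0 else s (j - 1)) * ((-1)^j * det (mat_delete (Bv s n (\<lambda>_. 0)) n j)))"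
    unfolding lessThan_Suc_atMost
  proof (rule sum.cong[OF refl])
    fix j assume j: "j \<in> {..n}"
    have "mat_delete (Hm s n) 0 j = mat_delete (Bv s n (\<lambda>_. 0)) n j"
      by (rule eq_matI) (auto simp: mat_delete_def Bv_def Hm_def)
    thus "Hm s n $$ (0,j) * cofactor (Hm s n) 0 j
      = (if j = 0 then 0 else s (j - 1)) * ((-1)^j * det (mat_delete (Bv s n (\<lambda>_. 0)) n j))"
      using j by (simp add: Hm_def cofactor_def)
  qed
  finally have "Deltam1 s n = (\<Sum>j\<le>n. (if j = 0 then 0 else s (j - 1)) * ((-1)^j * det (mat_delete (Bv s n (\<lambda>_. 0)) n j)))"
    by (simp add: Deltam1_eq)
  hence "(-1)^n * Deltam1 s n = (\<Sum>j\<le>n. (if j = 0 then 0 else s (j - 1)) * cf s n j)"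
  proof -
    have "(-1)^n * Deltam1 s n = (\<Sum>j\<le>n. (-1)^n * ((if j = 0 then 0 else s (j - 1)) * ((-1)^j * det (mat_delete (Bv s n (\<lambda>_. 0)) n j))))"
      using \<open>Deltam1 s n = _\<close> by (simp add: sum_distrib_left)
    also have "\<dots> = (\<Sum>j\<le>n. (if j = 0 then 0 else s (j - 1)) * cf s n j)"
      by (rule sum.cong[OF refl]) (simp add: cf_def power_add)
    finally show ?thesis .
  qed
  thus ?thesis by (simp add: det_Bv)
qed

definition Mp :: "(nat \<Rightarrow> real) \<Rightarrow> nat \<Rightarrow> real poly mat" where
  "Mp s n = mat (n + 1) (n + 1) (\<lambda>(i,j). if i < n then [: s (i + j) :] else monom 1 j)"

lemma det_Mp: "det (Mp s n) = (\<Sum>j\<le>n. monom (cf s n j) j)"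
proof -
  have h: "comm_ring_hom (\<lambda>x::real. [:x:])" by unfold_locales auto
  have "det (Mp s n) = (\<Sum>j<Suc n. Mp s n $$ (n,j) * cofactor (Mp s n) n j)"
    by (rule laplace_expansion_row) (auto simp: Mp_def)
  also have "\<dots> = (\<Sum>j\<le>n. monom (cf s n j) j)" unfolding lessThan_Suc_atMost
  proof (rule sum.cong[OF refl])
    fix j assume j: "j \<in> {..n}"
    have "mat_delete (Mp s n) n j = map_mat (\<lambda>x. [:x:]) (mat_delete (Bv s n (\<lambda>_. 0)) n j)"
      by (rule eq_matI) (auto simp: mat_delete_def Bv_def Mp_def)
    hence "det (mat_delete (Mp s n) n j) = [: det (mat_delete (Bv s n (\<lambda>_. 0)) n j) :]"
      using Determinant.comm_ring_hom.hom_det[OF h] by simp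
    moreover have "((-1)::real poly)^(n+j) = [:(-1)^(n+j):]"
    proof -
      have "[:-1:] = (-1::real poly)" by (simp add: one_pCons)
      thus ?thesis by (simp add: poly_const_pow[symmetric])
    qed
    ultimately show "Mp s n $$ (n,j) * cofactor (Mp s n) n j = monom (cf s n j) j"
      using j by (simp add: Mp_def cofactor_def cf_def smult_monom mult.commute)
  qed
  finally show ?thesis .
qed

lemma det_1x1: "A \<in> carrier_mat 1 1 \<Longrightarrow> det A = A $$ (0,0)"
proof -
  assume A: "A \<in> carrier_mat 1 1"
  have "det A = A $$ (0,0) * cofactor A 0 0" by (rule det_col_single[OF A]) auto
  moreover have "mat_delete A 0 0 = 1\<^sub>m 0" using A by (auto intro!: eq_matI simp: mat_delete_def)
  ultimately show ?thesis by (simp add: cofactor_def)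
qed

definition cc :: "(nat \<Rightarrow> real) \<Rightarrow> nat \<Rightarrow> real" where
  "cc s n = 1 / sqrt (Delta0 s (int n - 1) * Delta0 s (int n))"

lemma Delta0_0: "Delta0 s 0 = s 0"
  using det_1x1[of "mat 1 1 (\<lambda>(i,j). s (i+j))"] by (simp add: Delta0_def)

lemma Ppoly_eq: "n \<ge> 1 \<Longrightarrow> Ppoly s n = Polynomial.smult (cc s n) (\<Sum>j\<le>n. monom (cf s n j) j)"
  using det_Mp[of s n] by (simp add: Ppoly_def cc_def Mp_def)

lemma Pfun0: "Pfun s n 0 = cc s n * (-1)^n * Delta1 s n"
proof (cases "n = 0")
  case True
  have "Delta0 s (-1) = 1" by (simp add: Delta0_def)
  thus ?thesis using True by (simp add: Pfun_def Ppoly_def cc_def Delta0_0 Delta1_def)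
next
  case False
  hence "poly (Ppoly s n) 0 = cc s n * (\<Sum>j\<le>n. cf s n j * 0 ^ j)"
    by (simp add: Ppoly_eq poly_sum poly_monom)
  also have "(\<Sum>j\<le>n. cf s n j * 0 ^ j) = cf s n 0"
    by (simp add: power_0_left if_distrib sum.delta' cong: if_cong)
  finally show ?thesis by (simp add: Pfun_def cf0)
qed

lemma divdiff_pCons: "divdiff (pCons a q) 0 x = poly q x"
  by (simp add: divdiff_def pderiv_pCons)

lemma integral_poly:
  assumes m: "moment_measure s \<rho>" and d: "degree q \<le> N"
  shows "(\<integral>x. poly q x \<partial>\<rho>) = (\<Sum>i\<le>N. coeff q i * s i)"
proof -
  have int: "integrable \<rho> (\<lambda>x. x ^ k)" and mom: "(\<integral>x. x ^ k \<partial>\<rho>) = s k" for k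
    using m by (auto simp: moment_measure_def)
  have "poly q x = (\<Sum>i\<le>N. coeff q i * x ^ i)" for x
  proof -
    have "poly q x = poly (\<Sum>i\<le>N. monom (coeff q i) i) x" by (simp add: poly_as_sum_of_monoms'[OF d])
    thus ?thesis by (simp add: poly_sum poly_monom)
  qed
  hence "(\<integral>x. poly q x \<partial>\<rho>) = (\<integral>x. (\<Sum>i\<le>N. coeff q i * x ^ i) \<partial>\<rho>)" by simp
  also have "\<dots> = (\<Sum>i\<le>N. \<integral>x. coeff q i * x ^ i \<partial>\<rho>)"
    by (rule Bochner_Integration.integral_sum) (use int in auto)
  also have "\<dots> = (\<Sum>i\<le>N. coeff q i * s i)" by (simp add: mom)
  finally show ?thesis .
qed

lemma Qfun0: assumes m: "moment_measure s \<rho>"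
  shows "Qfun s \<rho> n 0 = cc s n * (-1)^n * Deltam1 s n"
proof (cases n)
  case 0
  thus ?thesis by (simp add: Qfun_def Deltam1_def)
next
  case (Suc m)
  obtain a q where pq: "Ppoly s n = pCons a q" by (cases "Ppoly s n") auto
  have "Ppoly s n = Polynomial.smult (cc s n) (\<Sum>j\<le>n. monom (cf s n j) j)"
    using Suc Ppoly_eq by simp
  hence dp: "degree (Ppoly s n) \<le> n"
    by (auto intro!: order.trans[OF degree_smult_le] degree_sum_le order.trans[OF degree_monom_le])
  have dq: "degree q \<le> n" using dp pq by (auto simp: degree_pCons_eq_if split: if_splits)
  have cq: "coeff q i = cc s n * (if Suc i \<le> n then cf s n (Suc i) else 0)" for i
  proof -
    have "coeff q i = coeff (Ppoly s n) (Suc i)" using pq by simp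
    also have "\<dots> = cc s n * (if Suc i \<le> n then cf s n (Suc i) else 0)"
      using Suc by (simp add: Ppoly_eq coeff_sum coeff_monom)
    finally show ?thesis .
  qed
  have "Qfun s \<rho> n 0 = (\<integral>x. poly q x \<partial>\<rho>)"
  proof -
    have "divdiff (pCons a q) 0 = poly q" by (rule ext) (simp add: divdiff_pCons)
    thus ?thesis using Suc pq by (simp add: Qfun_def)
  qed
  also have "\<dots> = (\<Sum>i\<le>n. coeff q i * s i)" by (rule integral_poly[OF m dq])
  also have "\<dots> = cc s n * (\<Sum>i\<le>m. cf s n (Suc i) * s i)"
    unfolding cq Suc sum.atMost_Suc by (simp add: sum_distrib_left mult_ac)
  also have "(\<Sum>i\<le>m. cf s n (Suc i) * s i) = det (Bv s n (\<lambda>j. if j = 0 then 0 else s (j - 1)))"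
    unfolding det_Bv Suc sum.atMost_Suc_shift by (simp add: mult_ac)
  finally show ?thesis by (simp add: det_Bv_m1)
qed

lemma D0m_pos: assumes sp: "strictly_positive s" shows "Delta0 s (int n - 1) > 0"
proof (cases n)
  case 0 thus ?thesis by (simp add: Delta0_def)
next
  case (Suc m)
  hence "int n - 1 = int m" by simp
  thus ?thesis using D0_pos[OF sp, of m] by simp
qed

lemma cc_sq: assumes sp: "strictly_positive s"
  shows "(cc s n)^2 = 1 / (Delta0 s (int n - 1) * Delta0 s (int n))" and "cc s n > 0"
proof -
  have p: "Delta0 s (int n - 1) * Delta0 s (int n) > 0" using D0m_pos[OF sp] D0_pos[OF sp] by simp
  thus "(cc s n)^2 = 1 / (Delta0 s (int n - 1) * Delta0 s (int n))"
    by (simp add: cc_def power_divide)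
  show "cc s n > 0" using p by (simp add: cc_def)
qed

lemma ratio: assumes sp: "strictly_positive s" and m: "moment_measure s \<rho>" and d: "Delta1 s n \<noteq> 0"
  shows "Qfun s \<rho> n 0 / Pfun s n 0 = Deltam1 s n / Delta1 s n"
  using cc_sq(2)[OF sp, of n] d by (simp add: Qfun0[OF m] Pfun0)

theorem corollary5p4:
  fixes s :: "nat \<Rightarrow> real" and \<rho> :: "real measure" and j :: nat
  assumes "strictly_positive s"
    and "moment_measure s \<rho>"
  shows "lcoef s j = \<bar>Pfun s (kidx s j) 0\<bar>\<^sup>2
    \<and> omegacoef s j = Qfun s \<rho> (kidx s j) 0 / Pfun s (kidx s j) 0
                      - Qfun s \<rho> (kidx s (Suc j)) 0 / Pfun s (kidx s (Suc j)) 0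
    \<and> (kidx s (Suc j) - kidx s j = 1 \<longrightarrow> upsiloncoef s j = 0)
    \<and> (kidx s (Suc j) - kidx s j = 2 \<longrightarrow> upsiloncoef s j = \<bar>Qfun s \<rho> (kidx s j + 1) 0\<bar>\<^sup>2)"
proof -
  note sp = assms(1) and m = assms(2)
  have m1: "((-1::real)^k)^2 = 1" for k by (induct k) (auto simp: power2_eq_square)
  define K where "K = kidx s j"
  define K' where "K' = kidx s (Suc j)"
  have dK: "Delta1 s K \<noteq> 0" using kidx_D1[OF sp] K_def by simp
  have dK': "Delta1 s K' \<noteq> 0" using kidx_D1[OF sp] K'_def by simp
  have gap: "(Delta1 s (Suc K) \<noteq> 0 \<and> K' = Suc K) \<or> (Delta1 s (Suc K) = 0 \<and> K' = Suc (Suc K))"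
    using kidx_gap[OF sp, of j] K_def K'_def by simp
  have l: "lcoef s j = \<bar>Pfun s K 0\<bar>\<^sup>2"
  proof -
    have "\<bar>Pfun s K 0\<bar>\<^sup>2 = (cc s K)^2 * (Delta1 s K)^2"
      by (simp add: Pfun0 power_mult_distrib power2_abs m1)
    thus ?thesis by (simp add: cc_sq(1)[OF sp] lcoef_def K_def)
  qed
  have r: "Qfun s \<rho> K 0 / Pfun s K 0 - Qfun s \<rho> K' 0 / Pfun s K' 0
      = Deltam1 s K / Delta1 s K - Deltam1 s K' / Delta1 s K'"
    using ratio[OF sp m dK] ratio[OF sp m dK'] by simp
  have o: "omegacoef s j = Deltam1 s K / Delta1 s K - Deltam1 s K' / Delta1 s K'"
    using gap
  proof
    assume a: "Delta1 s (Suc K) \<noteq> 0 \<and> K' = Suc K"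
    have ki: "Deltam1 s (Suc K) * Delta1 s K = Delta1 s (Suc K) * Deltam1 s K - (Delta0 s (int K))^2"
      by (rule key_identity)
    have "omegacoef s j = (Delta0 s (int K))\<^sup>2 / (Delta1 s K * Delta1 s (K + 1))"
      using a by (simp add: omegacoef_def K_def[symmetric] K'_def[symmetric] Let_def)
    also have "\<dots> = Deltam1 s K / Delta1 s K - Deltam1 s K' / Delta1 s K'"
      using a dK ki by (simp add: field_simps)
    finally show ?thesis .
  next
    assume a: "Delta1 s (Suc K) = 0 \<and> K' = Suc (Suc K)"
    thus ?thesis by (simp add: omegacoef_def K_def[symmetric] K'_def[symmetric] Let_def)
  qed
  have u1: "K' - K = 1 \<longrightarrow> upsiloncoef s j = 0"
    by (simp add: upsiloncoef_def K_def[symmetric] K'_def[symmetric] Let_def)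
  have u2: "K' - K = 2 \<longrightarrow> upsiloncoef s j = \<bar>Qfun s \<rho> (K + 1) 0\<bar>\<^sup>2"
  proof
    assume a: "K' - K = 2"
    have "\<bar>Qfun s \<rho> (K + 1) 0\<bar>\<^sup>2 = (cc s (Suc K))^2 * (Deltam1 s (Suc K))^2"
      by (simp add: Qfun0[OF m] power_mult_distrib power2_abs m1)
    also have "\<dots> = (Deltam1 s (K + 1))\<^sup>2 / (Delta0 s (int K) * Delta0 s (int K + 1))"
      by (simp add: cc_sq(1)[OF sp] add.commute)
    finally show "upsiloncoef s j = \<bar>Qfun s \<rho> (K + 1) 0\<bar>\<^sup>2"
      using a by (simp add: upsiloncoef_def K_def[symmetric] K'_def[symmetric] Let_def)
  qed
  show ?thesis using l o r u1 u2 unfolding K_def K'_def by simp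
qed

end
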